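(* Let $C$ be a finite set of conditional constructor set constraints. Then $C$ is unsatisfiable (has no solution) if and only if its saturation $\mathrm{Sat}(C)$ is trivially unsatisfiable, i.e. $\mathrm{Sat}(C)$ contains the constraint $\emptyset \mathbin{?} k \in \emptyset$ for some constructor $k$.
   Context: Fix a finite set $\underline{D}$ of datatype identifiers. Each $d \in \underline{D}$ has a finite set $\mathrm{Con}(d)$ of constructors. There is a countable supply of refinement variables $X, Y, Z, \dots$. An assignment $\theta$ maps each refinement variable $X$ to a function that sends each $d \in \underline{D}$ to a subset $\theta(X)(d) \subseteq \mathrm{Con}(d)$. A constructor set expression over $d$ is either a finite set $\{k_1,\dots,k_m\} \subseteq \mathrm{Con}(d)$ or a pair $X(d)$. Its meaning is $\theta[\![X(d)]\!] = \theta(X)(d)$ and $\theta[\![\{k_1,\dots,k_m\}]\!] = \{k_1,\dots,k_m\}$. An inclusion constraint $S_1 \subseteq S_2$ relates two expressions over the same $d$, and $k \in S$ abbreviates $\{k\} \subseteq S$. A (conditional) constraint $\phi \mathbin{?} S_1 \subseteq S_2$ consists of a finite set $\phi$ (the guard) of inclusions of the form $k \in X(d)$ together with an inclusion $S_1 \subseteq S_2$ (the body). $\theta$ satisfies $\phi \mathbin{?} S_1 \subseteq S_2$ if the following holds: whenever $k \in \theta(X)(d)$ for every $k \in X(d)$ in $\phi$, then $\theta[\![S_1]\!] \subseteq \theta[\![S_2]\!]$. A solution of a set $C$ is an assignment satisfying every constraint of $C$, and $C$ is satisfiable if it has a solution. A constraint is atomic if its body has one of the forms $X(d) \subseteq Y(d)$,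 $X(d) \subseteq \{k_1,\dots,k_m\}$, $k \in X(d)$, or $k \in \emptyset$. An atomic constraint is trivially unsatisfiable if it is $\emptyset \mathbin{?} k \in \emptyset$, and a set is trivially unsatisfiable if it contains such a constraint. Every constraint is converted to an equivalent finite set of atomic constraints with the same guard, as follows. A body $\{k_1,\dots,k_m\} \subseteq S$ is split into the bodies $k_i \in S$. A body $k \in \{k_1,\dots,k_m\}$ is dropped if $k$ is one of the $k_i$, and otherwise becomes $k \in \emptyset$. The saturation rules, with conclusions converted to atomic form, are: - (Transitivity) from $\phi \mathbin{?} S_1 \subseteq S_2$ and $\psi \mathbin{?} S_2 \subseteq S_3$, derive $\phi \cup \psi \mathbin{?} S_1 \subseteq S_3$; - (Satisfaction) from $\phi \mathbin{?} k \in X(d)$ and $\psi \cup \{k \in X(d)\} \mathbin{?} S_1 \subseteq S_2$, derive $\phi \cup \psi \mathbin{?} S_1 \subseteq S_2$; - (Weakening) from $\phi \mathbin{?} X(d) \subseteq Y(d)$ and $\psi \cup \{k \in Y(d)\} \mathbin{?} S_1 \subseteq S_2$, derive $\phi \cup \psi \cup \{k \in X(d)\} \mathbin{?} S_1 \subseteq S_2$. $\mathrm{Sat}(C)$ is the atomic constraint set obtained from (the atomic form of) $C$ by iteratively applying these rules until closure. *)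

theory Defs
  imports Main
begin

text \<open>Constructor set expressions over a datatype d: either a refinement variable
  applied to d, written X(d), or a finite set of constructors.\<close>
datatype ('v, 'd, 'k) cexp = EVar 'v 'd | ELit "'k set"

text \<open>A guard literal k \<in> X(d) is represented as the triple (k, X, d).\<close>
type_synonym ('v, 'd, 'k) guard = "('k \<times> 'v \<times> 'd) set"

datatype ('v, 'd, 'k) incl = Incl 'd "('v, 'd, 'k) cexp" "('v, 'd, 'k) cexp"

type_synonym ('v, 'd, 'k) constr = "('v, 'd, 'k) guard \<times> ('v, 'd, 'k) incl"

definition is_assignment :: "('d \<Rightarrow> 'k set) \<Rightarrow> ('v \<Rightarrow> 'd \<Rightarrow> 'k set) \<Rightarrow> bool" where
  "is_assignment Con \<theta> \<longleftrightarrow> (\<forall>X d. \<theta> X d \<subseteq> Con d)"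

fun sem :: "('v \<Rightarrow> 'd \<Rightarrow> 'k set) \<Rightarrow> ('v, 'd, 'k) cexp \<Rightarrow> 'k set" where
  "sem \<theta> (EVar X d) = \<theta> X d"
| "sem \<theta> (ELit A) = A"

fun satisfies :: "('v \<Rightarrow> 'd \<Rightarrow> 'k set) \<Rightarrow> ('v, 'd, 'k) constr \<Rightarrow> bool" where
  "satisfies \<theta> (\<phi>, Incl d S1 S2) =
     ((\<forall>(k, X, d') \<in> \<phi>. k \<in> \<theta> X d') \<longrightarrow> sem \<theta> S1 \<subseteq> sem \<theta> S2)"

definition satisfiable :: "('d \<Rightarrow> 'k set) \<Rightarrow> ('v, 'd, 'k) constr set \<Rightarrow> bool" where
  "satisfiable Con C \<longleftrightarrow> (\<exists>\<theta>. is_assignment Con \<theta> \<and> (\<forall>c \<in> C. satisfies \<theta> c))"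

fun wf_exp :: "('d \<Rightarrow> 'k set) \<Rightarrow> 'd \<Rightarrow> ('v, 'd, 'k) cexp \<Rightarrow> bool" where
  "wf_exp Con d (EVar X d') = (d' = d)"
| "wf_exp Con d (ELit A) = (finite A \<and> A \<subseteq> Con d)"

fun wf_constr :: "('d \<Rightarrow> 'k set) \<Rightarrow> ('v, 'd, 'k) constr \<Rightarrow> bool" where
  "wf_constr Con (\<phi>, Incl d S1 S2) =
     (finite \<phi> \<and> (\<forall>(k, X, d') \<in> \<phi>. k \<in> Con d') \<and> wf_exp Con d S1 \<and> wf_exp Con d S2)"

fun atomize :: "('v, 'd, 'k) constr \<Rightarrow> ('v, 'd, 'k) constr set" where
  "atomize (\<phi>, Incl d (EVar X d') S) = {(\<phi>, Incl d (EVar X d') S)}"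
| "atomize (\<phi>, Incl d (ELit A) S) =
     (\<Union>k \<in> A. case S of
        EVar Y d' \<Rightarrow> {(\<phi>, Incl d (ELit {k}) (EVar Y d'))}
      | ELit B \<Rightarrow> (if k \<in> B then {} else {(\<phi>, Incl d (ELit {k}) (ELit {}))}))"

inductive_set Sat :: "('v, 'd, 'k) constr set \<Rightarrow> ('v, 'd, 'k) constr set"
  for C :: "('v, 'd, 'k) constr set" where
  base: "c \<in> C \<Longrightarrow> a \<in> atomize c \<Longrightarrow> a \<in> Sat C"
| trans: "(\<phi>, Incl d S1 S2) \<in> Sat C \<Longrightarrow> (\<psi>, Incl d S2 S3) \<in> Sat C \<Longrightarrow>
          a \<in> atomize (\<phi> \<union> \<psi>, Incl d S1 S3) \<Longrightarrow> a \<in> Sat C"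
| satisf: "(\<phi>, Incl d (ELit {k}) (EVar X d)) \<in> Sat C \<Longrightarrow>
          (insert (k, X, d) \<psi>, b) \<in> Sat C \<Longrightarrow>
          a \<in> atomize (\<phi> \<union> \<psi>, b) \<Longrightarrow> a \<in> Sat C"
| weaken: "(\<phi>, Incl d (EVar X d) (EVar Y d)) \<in> Sat C \<Longrightarrow>
          (insert (k, Y, d) \<psi>, b) \<in> Sat C \<Longrightarrow>
          a \<in> atomize (\<phi> \<union> \<psi> \<union> {(k, X, d)}, b) \<Longrightarrow> a \<in> Sat C"

definition trivially_unsat :: "('v, 'd, 'k) constr set \<Rightarrow> bool" where
  "trivially_unsat S \<longleftrightarrow> (\<exists>d k. ({}, Incl d (ELit {k}) (ELit {})) \<in> S)"

end

theory Submission
  imports Defs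
begin

lemma atomize_sound:
  assumes "satisfies \<theta> c" "a \<in> atomize c" shows "satisfies \<theta> a"
proof -
  obtain \<phi> d S1 S2 where c: "c = (\<phi>, Incl d S1 S2)" by (metis incl.exhaust surj_pair)
  show ?thesis using assms unfolding c
    by (cases S1; cases S2; auto split: if_splits)
qed

lemma atomize_complete:
  assumes "\<forall>a \<in> atomize c. satisfies \<theta> a" shows "satisfies \<theta> c"
proof -
  obtain \<phi> d S1 S2 where c: "c = (\<phi>, Incl d S1 S2)" by (metis incl.exhaust surj_pair)
  show ?thesis using assms unfolding c
    by (cases S1; cases S2; fastforce split: if_splits)
qed

lemma atomize_atomic:
  assumes "a \<in> atomize c" shows "atomize (\<psi>, snd a) = {(\<psi>, snd a)}"
proof -
  obtain \<phi> d S1 S2 where c: "c = (\<phi>, Incl d S1 S2)" by (metis incl.exhaust surj_pair)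
  show ?thesis using assms unfolding c
    by (cases S1; cases S2; auto split: if_splits)
qed

lemma Sat_atomic:
  assumes "a \<in> Sat C" shows "atomize (\<psi>, snd a) = {(\<psi>, snd a)}"
  using assms by cases (metis atomize_atomic)+

lemma atomize_shape:
  assumes "a \<in> atomize c"
  shows "(\<exists>d X d' S. snd a = Incl d (EVar X d') S) \<or> (\<exists>d k Y d'. snd a = Incl d (ELit {k}) (EVar Y d'))
     \<or> (\<exists>d k. snd a = Incl d (ELit {k}) (ELit {}))"
proof -
  obtain \<phi> d S1 S2 where c: "c = (\<phi>, Incl d S1 S2)" by (metis incl.exhaust surj_pair)
  show ?thesis using assms unfolding c
    by (cases S1; cases S2; auto split: if_splits)
qed

lemma Sat_shape:
  assumes "a \<in> Sat C"
  shows "(\<exists>d X d' S. snd a = Incl d (EVar X d') S) \<or> (\<exists>d k Y d'. snd a = Incl d (ELit {k}) (EVar Y d'))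
     \<or> (\<exists>d k. snd a = Incl d (ELit {k}) (ELit {}))"
  using assms by cases (metis atomize_shape)+

lemma atomize_wf:
  assumes "wf_constr Con c" "a \<in> atomize c" shows "wf_constr Con a"
proof -
  obtain \<phi> d S1 S2 where c: "c = (\<phi>, Incl d S1 S2)" by (metis incl.exhaust surj_pair)
  show ?thesis using assms unfolding c
    by (cases S1; cases S2; auto split: if_splits)
qed

lemma wf_guard_change:
  assumes "wf_constr Con (\<phi>, b)" "finite \<psi>" "\<forall>(k, X, d') \<in> \<psi>. k \<in> Con d'"
  shows "wf_constr Con (\<psi>, b)"
  using assms by (cases b) auto

lemma wf_guard:
  assumes "wf_constr Con (\<phi>, b)" shows "finite \<phi> \<and> (\<forall>(k, X, d') \<in> \<phi>. k \<in> Con d')"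
  using assms by (cases b) auto

lemma Sat_wf:
  assumes "\<forall>c \<in> C. wf_constr Con c" "a \<in> Sat C" shows "wf_constr Con a"
  using assms(2)
proof induction
  case (base c a) thus ?case using assms(1) atomize_wf by blast
next
  case (trans \<phi> d S1 S2 \<psi> S3 a)
  have "wf_constr Con (\<phi> \<union> \<psi>, Incl d S1 S3)" using trans.IH by auto
  thus ?case using trans.hyps atomize_wf by blast
next
  case (satisf \<phi> d k X \<psi> b a)
  have "wf_constr Con (\<phi> \<union> \<psi>, b)"
    apply (rule wf_guard_change[OF satisf.IH(2)])
    using wf_guard[OF satisf.IH(1)] wf_guard[OF satisf.IH(2)] by auto
  thus ?case using satisf.hyps atomize_wf by blast
next
  case (weaken \<phi> d X Y k \<psi> b a)
  have "wf_constr Con (\<phi> \<union> \<psi> \<union> {(k, X, d)}, b)"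
    apply (rule wf_guard_change[OF weaken.IH(2)])
    using wf_guard[OF weaken.IH(1)] wf_guard[OF weaken.IH(2)] by auto
  thus ?case using weaken.hyps atomize_wf by blast
qed

lemma Sat_sound:
  assumes "\<forall>c \<in> C. satisfies \<theta> c" "a \<in> Sat C" shows "satisfies \<theta> a"
  using assms(2)
proof induction
  case (base c a) thus ?case using assms(1) atomize_sound by blast
next
  case (trans \<phi> d S1 S2 \<psi> S3 a)
  have "satisfies \<theta> (\<phi> \<union> \<psi>, Incl d S1 S3)" using trans.IH by (simp add: Ball_def split_def; blast)
  thus ?case using trans.hyps atomize_sound by blast
next
  case (satisf \<phi> d k X \<psi> b a)
  have "satisfies \<theta> (\<phi> \<union> \<psi>, b)"
    proof -
    obtain e T1 T2 where "b = Incl e T1 T2" by (cases b)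
    thus ?thesis using satisf.IH by (simp add: Ball_def split_def; blast)
  qed
  thus ?case using satisf.hyps atomize_sound by blast
next
  case (weaken \<phi> d X Y k \<psi> b a)
  have "satisfies \<theta> (\<phi> \<union> \<psi> \<union> {(k, X, d)}, b)"
    proof -
    obtain e T1 T2 where "b = Incl e T1 T2" by (cases b)
    thus ?thesis using weaken.IH by (simp add: Ball_def split_def; blast)
  qed
  thus ?case using weaken.hyps atomize_sound by blast
qed

lemma guard_elim:
  assumes "finite F"
  shows "(\<forall>(k, X, d) \<in> F. ({}, Incl d (ELit {k}) (EVar X d)) \<in> Sat C) \<Longrightarrow>
         (F \<union> G, b) \<in> Sat C \<Longrightarrow> (G, b) \<in> Sat C"
  using assms
proof (induction F arbitrary: G rule: finite_induct)
  case empty thus ?case by simp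
next
  case (insert x F G)
  obtain k X d where x: "x = (k, X, d)" by (metis prod.exhaust)
  have f: "({}, Incl d (ELit {k}) (EVar X d)) \<in> Sat C" using insert.prems x by auto
  have m: "(insert (k, X, d) (F \<union> G), b) \<in> Sat C" using insert.prems x by simp
  have "atomize ({} \<union> (F \<union> G), b) = {(F \<union> G, b)}"
    using Sat_atomic[OF m, of "F \<union> G"] by simp
  hence "(F \<union> G, b) \<in> Sat C" using Sat.satisf[OF f m] by blast
  thus ?case using insert.IH insert.prems by blast
qed

theorem theorem8p4:
  fixes Con :: "'d::finite \<Rightarrow> 'k set"
    and C :: "('v, 'd, 'k) constr set"
  assumes "\<And>d. finite (Con d)"
    and "finite C"
    and "\<forall>c \<in> C. wf_constr Con c"
  shows "\<not> satisfiable Con C \<longleftrightarrow> trivially_unsat (Sat C)"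
proof
  assume ns: "\<not> satisfiable Con C"
  show "trivially_unsat (Sat C)"
  proof (rule ccontr)
    assume nt: "\<not> trivially_unsat (Sat C)"
    define \<theta> where "\<theta> X d = {k \<in> Con d. ({}, Incl d (ELit {k}) (EVar X d)) \<in> Sat C}" for X d
    have asg: "is_assignment Con \<theta>" unfolding is_assignment_def \<theta>_def by auto
    have sat0: "satisfies \<theta> ({}, b)" if b: "({}, b) \<in> Sat C" for b
    proof -
      obtain d S1 S2 where bb: "b = Incl d S1 S2" by (cases b)
      have wf: "wf_constr Con ({}, b)" using Sat_wf[OF assms(3) b] .
      have at: "atomize (\<psi>, b) = {(\<psi>, b)}" for \<psi> using Sat_atomic[OF b, of \<psi>] by simp
      show ?thesis
      proof (cases S1)
        case (EVar X d1)
        have d1: "d1 = d" using wf bb EVar by simp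
        show ?thesis
        proof (cases S2)
          case (EVar Y d2)
          have d2: "d2 = d" using wf bb EVar by simp
          have "\<theta> X d \<subseteq> \<theta> Y d"
          proof
            fix k assume "k \<in> \<theta> X d"
            hence k: "k \<in> Con d" "({}, Incl d (ELit {k}) (EVar X d)) \<in> Sat C"
              unfolding \<theta>_def by auto
            have "({}, Incl d (ELit {k}) (EVar Y d)) \<in> Sat C"
              by (rule Sat.trans[OF k(2) b[unfolded bb \<open>S1 = _\<close> EVar d1 d2]]) simp
            thus "k \<in> \<theta> Y d" using k unfolding \<theta>_def by auto
          qed
          thus ?thesis using bb \<open>S1 = _\<close> EVar d1 d2 by simp
        next
          case (ELit B)
          have "\<theta> X d \<subseteq> B"
          proof
            fix k assume "k \<in> \<theta> X d"
            hence k: "k \<in> Con d" "({}, Incl d (ELit {k}) (EVar X d)) \<in> Sat C"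
              unfolding \<theta>_def by auto
            show "k \<in> B"
            proof (rule ccontr)
              assume "k \<notin> B"
              hence "({}, Incl d (ELit {k}) (ELit {})) \<in> Sat C"
                by (intro Sat.trans[OF k(2) b[unfolded bb \<open>S1 = _\<close> ELit d1]]) simp
              thus False using nt unfolding trivially_unsat_def by blast
            qed
          qed
          thus ?thesis using bb \<open>S1 = _\<close> ELit d1 by simp
        qed
      next
        case (ELit A)
        obtain k where A: "A = {k}" and S2: "S2 = ELit {} \<or> (\<exists>Y. S2 = EVar Y d)"
          using Sat_shape[OF b] wf unfolding bb ELit
          by auto
        show ?thesis
        proof (cases "S2 = ELit {}")
          case True
          thus ?thesis using nt b bb ELit A unfolding trivially_unsat_def by blast
        next
          case False
          then obtain Y where Y: "S2 = EVar Y d" using S2 by blast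
          have "k \<in> Con d" using wf bb ELit A by simp
          hence "k \<in> \<theta> Y d" using b bb ELit A Y unfolding \<theta>_def by simp
          thus ?thesis using bb ELit A Y by simp
        qed
      qed
    qed
    have satall: "satisfies \<theta> a" if a: "a \<in> Sat C" for a
    proof -
      obtain \<phi> b where ab: "a = (\<phi>, b)" by (cases a)
      obtain d S1 S2 where bb: "b = Incl d S1 S2" by (cases b)
      have fin: "finite \<phi>" using wf_guard[of Con \<phi> b] Sat_wf[OF assms(3) a] ab by simp
      show ?thesis unfolding ab bb satisfies.simps
      proof
        assume g: "\<forall>(k, X, d')\<in>\<phi>. k \<in> \<theta> X d'"
        hence "\<forall>(k, X, d')\<in>\<phi>. ({}, Incl d' (ELit {k}) (EVar X d')) \<in> Sat C"
          unfolding \<theta>_def by auto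
        from guard_elim[OF fin this, of "{}" b] a ab
        have "({}, b) \<in> Sat C" by simp
        from sat0[OF this] show "sem \<theta> S1 \<subseteq> sem \<theta> S2" using bb by simp
      qed
    qed
    have "\<forall>c\<in>C. satisfies \<theta> c"
    proof
      fix c assume "c \<in> C"
      thus "satisfies \<theta> c" using atomize_complete satall Sat.base by blast
    qed
    hence "satisfiable Con C" using asg unfolding satisfiable_def by blast
    thus False using ns by simp
  qed
next
  assume "trivially_unsat (Sat C)"
  then obtain d k where t: "({}, Incl d (ELit {k}) (ELit {})) \<in> Sat C"
    unfolding trivially_unsat_def by blast
  show "\<not> satisfiable Con C"
  proof
    assume "satisfiable Con C"
    then obtain \<theta> where "\<forall>c \<in> C. satisfies \<theta> c" unfolding satisfiable_def by blast
    from Sat_sound[OF this t] show False by simp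
  qed
qed

end
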